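(* Let $f:\mathbb{R}^d\to\mathbb{R}^d$ be a linear isomorphism having real eigenvalues $\lambda$ and $\mu$ with $\lambda>1$ and $0<\mu<1$. Then $f$ does not satisfy the topological shadowing property.
   Context: Let $(X,d)$ be a metric space and $f:X\to X$ a homeomorphism; $\mathcal{C}^+=\{\epsilon:X\to\mathbb{R}^+ : \epsilon \text{ continuous}\}$. For $\delta\in\mathcal{C}^+$, a sequence $\{x_n\}_{n\in\mathbb{Z}}\subset X$ is a $\delta$-pseudo-orbit of $f$ if $d(f(x_n),x_{n+1})<\delta(f(x_n))$ for every $n\in\mathbb{Z}$. For $\epsilon\in\mathcal{C}^+$, the sequence $\{x_n\}$ is $\epsilon$-shadowed by an orbit if there is $y\in X$ with $d(f^n(y),x_n)<\epsilon(x_n)$ for every $n\in\mathbb{Z}$. The homeomorphism $f$ satisfies the topological shadowing property if for every $\epsilon\in\mathcal{C}^+$ there exists $\delta\in\mathcal{C}^+$ such that every $\delta$-pseudo-orbit is $\epsilon$-shadowed by an orbit. $\mathbb{R}^d$ carries the Euclidean metric. *)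

theory Defs
  imports "HOL-Analysis.Analysis"
begin

definition pos_cont :: "('a::metric_space \<Rightarrow> real) \<Rightarrow> bool" where
  "pos_cont e \<longleftrightarrow> continuous_on UNIV e \<and> (\<forall>x. 0 < e x)"

definition int_iter :: "('a \<Rightarrow> 'a) \<Rightarrow> int \<Rightarrow> 'a \<Rightarrow> 'a" where
  "int_iter f n = (if 0 \<le> n then f ^^ nat n else inv f ^^ nat (- n))"

definition pseudo_orbit :: "('a::metric_space \<Rightarrow> 'a) \<Rightarrow> ('a \<Rightarrow> real) \<Rightarrow> (int \<Rightarrow> 'a) \<Rightarrow> bool" where
  "pseudo_orbit f \<delta> x \<longleftrightarrow> (\<forall>n. dist (f (x n)) (x (n + 1)) < \<delta> (f (x n)))"

definition shadowed :: "('a::metric_space \<Rightarrow> 'a) \<Rightarrow> ('a \<Rightarrow> real) \<Rightarrow> (int \<Rightarrow> 'a) \<Rightarrow> bool" where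
  "shadowed f \<epsilon> x \<longleftrightarrow> (\<exists>y. \<forall>n. dist (int_iter f n y) (x n) < \<epsilon> (x n))"

definition topological_shadowing :: "('a::metric_space \<Rightarrow> 'a) \<Rightarrow> bool" where
  "topological_shadowing f \<longleftrightarrow>
     (\<forall>\<epsilon>. pos_cont \<epsilon> \<longrightarrow>
        (\<exists>\<delta>. pos_cont \<delta> \<and> (\<forall>x. pseudo_orbit f \<delta> x \<longrightarrow> shadowed f \<epsilon> x)))"

end

theory Submission
  imports Defs
begin

lemma funpow_lin_diff:
  fixes f :: "'a::real_normed_vector \<Rightarrow> 'a"
  assumes "linear f"
  shows "(f ^^ k) (x - y) = (f ^^ k) x - (f ^^ k) y"
  by (induction k) (auto simp: funpow.simps linear_diff[OF assms])

lemma funpow_eig: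
  fixes f :: "'a::real_normed_vector \<Rightarrow> 'a"
  assumes "linear f" "f v = l *\<^sub>R v" "f w = m *\<^sub>R w"
  shows "(f ^^ k) (c *\<^sub>R v + d *\<^sub>R w) = (c * l ^ k) *\<^sub>R v + (d * m ^ k) *\<^sub>R w"
  by (induction k) (auto simp: linear_add[OF assms(1)] linear_scale[OF assms(1)] assms(2,3) funpow.simps ac_simps)

lemma inv_eig:
  fixes f :: "'a::real_normed_vector \<Rightarrow> 'a"
  assumes "linear f" "bij f" "f v = l *\<^sub>R v" "f w = m *\<^sub>R w" "l \<noteq> 0" "m \<noteq> 0"
  shows "(inv f ^^ k) (c *\<^sub>R v + d *\<^sub>R w) = (c / l ^ k) *\<^sub>R v + (d / m ^ k) *\<^sub>R w"
proof (induction k)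
  case 0 then show ?case by (simp add: funpow.simps)
next
  case (Suc k)
  have inj: "inj f" using assms(2) bij_is_inj by blast
  let ?z = "(c / l ^ Suc k) *\<^sub>R v + (d / m ^ Suc k) *\<^sub>R w"
  have "f ?z = (c / l ^ k) *\<^sub>R v + (d / m ^ k) *\<^sub>R w"
    using assms by (simp add: linear_add linear_scale field_simps)
  then have "inv f ((c / l ^ k) *\<^sub>R v + (d / m ^ k) *\<^sub>R w) = ?z"
    by (metis inj inv_f_f)
  then show ?case using Suc by simp
qed

lemma norm_lower:
  fixes f :: "'a::real_normed_vector \<Rightarrow> 'a"
  assumes "linear f" "\<And>x. B * norm x \<le> norm (f x)" "B > 0"
  shows "B ^ k * norm u \<le> norm ((f ^^ k) u)"
proof (induction k)
  case 0 then show ?case by (simp add: funpow.simps)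
next
  case (Suc k)
  have "B ^ Suc k * norm u = B * (B ^ k * norm u)" by simp
  also have "\<dots> \<le> B * norm ((f ^^ k) u)" using Suc assms(3) by simp
  also have "\<dots> \<le> norm (f ((f ^^ k) u))" using assms(2) by blast
  finally show ?case by simp
qed

lemma pc_eps: "pos_cont (\<lambda>x::'a::real_normed_vector. 1 / (1 + norm x) ^ p)"
  unfolding pos_cont_def
  apply (intro conjI allI)
   apply (intro continuous_intros)
   apply (auto simp: add_pos_nonneg)
  by (metis add_pos_nonneg norm_ge_zero zero_less_one power_not_zero less_numeral_extra(3))

theorem mainTheorem5:
  fixes f :: "real ^ 'n \<Rightarrow> real ^ 'n" and l m :: real
  assumes "linear f" and "bij f"
    and "\<exists>v. v \<noteq> 0 \<and> f v = l *\<^sub>R v" and "l > 1"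
    and "\<exists>w. w \<noteq> 0 \<and> f w = m *\<^sub>R w" and "0 < m" and "m < 1"
  shows "\<not> topological_shadowing f"
proof
  assume ts: "topological_shadowing f"
  note lin = assms(1)
  have inj: "inj f" using assms(2) bij_is_inj by blast
  obtain v0 where v0: "v0 \<noteq> 0" "f v0 = l *\<^sub>R v0" using assms(3) by blast
  obtain w0 where w0: "w0 \<noteq> 0" "f w0 = m *\<^sub>R w0" using assms(5) by blast
  define v where "v = (1 / norm v0) *\<^sub>R v0"
  define w where "w = (1 / norm w0) *\<^sub>R w0"
  have nv: "norm v = 1" using v0 by (simp add: v_def)
  have nw: "norm w = 1" using w0 by (simp add: w_def)
  have fv: "f v = l *\<^sub>R v" using v0 by (simp add: v_def linear_scale[OF lin])
  have fw: "f w = m *\<^sub>R w" using w0 by (simp add: w_def linear_scale[OF lin])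
  obtain B where B: "B > 0" "\<And>x. B * norm x \<le> norm (f x)"
    using linear_inj_bounded_below_pos[OF lin inj] by blast
  obtain p :: nat where p: "2 / B < l ^ p" using real_arch_pow[OF assms(4)] by blast
  define \<epsilon> where "\<epsilon> = (\<lambda>x::real^'n. 1 / (1 + norm x) ^ p)"
  have "pos_cont \<epsilon>" unfolding \<epsilon>_def by (rule pc_eps)
  then obtain \<delta> where \<delta>: "pos_cont \<delta>" "\<And>x. pseudo_orbit f \<delta> x \<Longrightarrow> shadowed f \<epsilon> x"
    using ts unfolding topological_shadowing_def by blast
  have d0: "\<delta> 0 > 0" using \<delta>(1) by (simp add: pos_cont_def)
  define a where "a = min (\<delta> 0 / 4) (1/2)"
  have a: "a > 0" "a \<le> 1/2" "a \<le> \<delta> 0 / 4" using d0 by (auto simp: a_def)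
  define e where "e = a *\<^sub>R v + a *\<^sub>R w"
  have ne: "norm e < \<delta> 0"
  proof -
    have "norm e \<le> norm (a *\<^sub>R v) + norm (a *\<^sub>R w)" unfolding e_def by (rule norm_triangle_ineq)
    also have "\<dots> = 2 * a" using nv nw a by simp
    finally show ?thesis using a d0 by linarith
  qed
  define X where "X = (\<lambda>n::int. if n \<le> 0 then 0 else (f ^^ nat (n - 1)) e)"
  have f0: "f 0 = 0" using linear_0[OF lin] .
  have "pseudo_orbit f \<delta> X"
    unfolding pseudo_orbit_def
  proof
    fix n :: int
    show "dist (f (X n)) (X (n + 1)) < \<delta> (f (X n))"
    proof (cases "n < 0")
      case True then show ?thesis using d0 f0 by (simp add: X_def)
    next
      case False
      show ?thesis
      proof (cases "n = 0")
        case True then show ?thesis using ne f0 by (simp add: X_def)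
      next
        case False2: False
        then have "n > 0" using False by simp
        then have "nat n = Suc (nat (n - 1))" by simp
        then have "f (X n) = X (n + 1)" using \<open>n > 0\<close>
          by (simp add: X_def)
        then show ?thesis using \<delta>(1) by (simp add: pos_cont_def)
      qed
    qed
  qed
  then obtain y where y: "\<And>n. dist (int_iter f n y) (X n) < \<epsilon> (X n)"
    using \<delta>(2) unfolding shadowed_def by blast
  define u where "u = f y - e"
  have fk: "(f ^^ k) e = (a * l ^ k) *\<^sub>R v + (a * m ^ k) *\<^sub>R w" for k
    unfolding e_def by (rule funpow_eig[OF lin fv fw])
  have fwd: "norm ((f ^^ k) u) < 1 / (a * l ^ k) ^ p" for k
  proof -
    have "dist (int_iter f (int k + 1) y) (X (int k + 1)) < \<epsilon> (X (int k + 1))" by (rule y)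
    moreover have "int_iter f (int k + 1) y = (f ^^ k) (f y)"
      unfolding int_iter_def by (simp add: nat_add_distrib funpow_Suc_right del: funpow.simps)
    moreover have "X (int k + 1) = (f ^^ k) e" by (simp add: X_def)
    ultimately have 1: "norm ((f ^^ k) u) < \<epsilon> ((f ^^ k) e)"
      by (simp add: u_def funpow_lin_diff[OF lin] dist_norm)
    have "m ^ k \<le> 1" using assms(6,7) by (simp add: power_le_one)
    have "norm ((a * l ^ k) *\<^sub>R v) \<le> norm ((f ^^ k) e) + norm ((a * m ^ k) *\<^sub>R w)"
      unfolding fk by (metis add_diff_cancel_right' norm_triangle_ineq4)
    then have "a * l ^ k \<le> norm ((f ^^ k) e) + a * m ^ k"
      using nv nw a assms(4,6) by simp
    moreover have "a * m ^ k \<le> 1" using \<open>m ^ k \<le> 1\<close> a assms(6)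
      by (intro mult_le_one) auto
    ultimately have 2: "a * l ^ k \<le> 1 + norm ((f ^^ k) e)" by linarith
    have "0 < a * l ^ k" using a assms(4) by simp
    then have "\<epsilon> ((f ^^ k) e) \<le> 1 / (a * l ^ k) ^ p"
      unfolding \<epsilon>_def using 2
      by (intro divide_left_mono power_mono mult_pos_pos) auto
    with 1 show ?thesis by linarith
  qed
  have u0: "u = 0"
  proof (rule ccontr)
    assume "u \<noteq> 0"
    then have nu: "norm u > 0" by simp
    have apos: "a ^ p > 0" using a by simp
    obtain k :: nat where k: "1 / (a ^ p * norm u) < 2 ^ k"
      using real_arch_pow[of 2 "1 / (a ^ p * norm u)"] by auto
    have Bl: "2 \<le> B * l ^ p" using p B(1) by (simp add: field_simps)
    have "B ^ k * norm u \<le> norm ((f ^^ k) u)" by (rule norm_lower[OF lin B(2) B(1)])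
    also have "\<dots> < 1 / (a * l ^ k) ^ p" by (rule fwd)
    finally have "B ^ k * norm u * (a ^ p * (l ^ p) ^ k) < 1"
      using a assms(4) by (simp add: field_simps power_mult_distrib power_mult[symmetric] mult.commute)
    then have "norm u * a ^ p * (B * l ^ p) ^ k < 1" by (simp add: power_mult_distrib algebra_simps)
    moreover have "(2::real) ^ k \<le> (B * l ^ p) ^ k" using Bl by (simp add: power_mono)
    then have "norm u * a ^ p * 2 ^ k \<le> norm u * a ^ p * (B * l ^ p) ^ k"
      using nu apos by simp
    moreover have "1 < norm u * a ^ p * 2 ^ k" using k nu apos by (simp add: field_simps)
    ultimately show False by linarith
  qed
  then have "f y = e" by (simp add: u_def)
  then have yi: "y = inv f e" by (metis inj inv_f_f)
  have im: "1 < 1 / m" using assms(6,7) by simp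
  obtain j0 :: nat where j0: "1 + 1 / a < (1 / m) ^ j0"
    using real_arch_pow[OF im] by blast
  define j where "j = j0"
  have "(1 / m) ^ j0 \<le> (1 / m) ^ Suc j0" using im by (intro power_increasing) auto
  then have j: "1 + 1 / a < (1 / m) ^ Suc j" using j0 unfolding j_def by linarith
  have "dist (int_iter f (- int j) y) (X (- int j)) < \<epsilon> (X (- int j))" by (rule y)
  moreover have "int_iter f (- int j) y = (inv f ^^ Suc j) e"
  proof -
    have "int_iter f (- int j) y = (inv f ^^ j) y" unfolding int_iter_def by (cases "j = 0") auto
    also have "\<dots> = (inv f ^^ Suc j) e" by (simp only: yi funpow_Suc_right comp_apply)
    finally show ?thesis .
  qed
  moreover have "(inv f ^^ Suc j) e = (a / l ^ Suc j) *\<^sub>R v + (a / m ^ Suc j) *\<^sub>R w"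
    unfolding e_def using assms(4,6) by (intro inv_eig[OF lin assms(2) fv fw]) auto
  moreover have "X (- int j) = 0" by (simp add: X_def)
  ultimately have lt: "norm ((a / l ^ Suc j) *\<^sub>R v + (a / m ^ Suc j) *\<^sub>R w) < 1"
    by (simp add: \<epsilon>_def dist_norm)
  have "norm ((a / m ^ Suc j) *\<^sub>R w) \<le> norm ((a / l ^ Suc j) *\<^sub>R v + (a / m ^ Suc j) *\<^sub>R w) + norm ((a / l ^ Suc j) *\<^sub>R v)"
    by (metis add_diff_cancel_left' norm_triangle_ineq4)
  then have 3: "a / m ^ Suc j < 1 + a / l ^ Suc j" using lt nv nw a assms(4,6) by simp
  have 4: "a / l ^ Suc j \<le> a" proof -
    have "1 \<le> l ^ Suc j" using assms(4) by (intro one_le_power) auto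
    then show ?thesis using a by (simp add: divide_le_eq)
  qed
  have "a * (1 + 1 / a) < a * (1 / m) ^ Suc j" using j a by (intro mult_strict_left_mono) auto
  moreover have "a * (1 + 1 / a) = a + 1" using a by (simp add: distrib_left)
  moreover have "a * (1 / m) ^ Suc j = a / m ^ Suc j" by (simp add: power_one_over)
  ultimately have "a + 1 < a / m ^ Suc j" by linarith
  then show False using 3 4 by linarith
qed

end
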